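(* Let $\tilde\nu$ be a probability measure on $\mathcal{C}_n$. Then there exists a product measure $\xi$ on $\mathcal{C}_n$ such that $$\mathrm{W}_1(\tilde\nu,\xi)\le\sqrt{n\,\mathrm{Tr}(\mathcal{H}(\tilde\nu))}.$$ Moreover, one may take $\xi$ to be the unique product measure whose center of mass lies at the point $\int_{\mathcal{C}_n}g_{\tilde\nu}(y)\,d\tilde\nu(y)$, which is equal to the center of mass of $\tilde\nu$.
   Context: $\mathcal{C}_n=\{-1,1\}^n$ with uniform probability measure $\mu$. For a probability measure $\nu$ on $\mathcal{C}_n$ with $f=\log\frac{d\nu}{d\mu}$, and $y\in\mathcal{C}_n$, $i\in[n]$, let $y_\pm$ agree with $y$ except the $i$-th coordinate equals $\pm1$; define $g_\nu(y)\in\mathbb{R}^n$ by $\langle g_\nu(y),e_i\rangle=\frac{e^{f(y_+)}-e^{f(y_-)}}{e^{f(y_+)}+e^{f(y_-)}}$ (taken to be $0$ if $\nu(y_+)=\nu(y_-)=0$). Define the matrix $\mathcal{H}(\nu)=\int g_\nu(y)^{\otimes2}d\nu(y)-\left(\int g_\nu(y)\,d\nu(y)\right)^{\otimes2}$, the covariance matrix of $g_\nu(X)$, $X\sim\nu$. $\mathrm{W}_1$ is the Wasserstein distance with respect to Hamming distance; a product measure is the law of a vector with independent coordinates. *)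

theory Defs
  imports "HOL-Probability.Probability"
begin

definition cube :: "nat \<Rightarrow> (nat \<Rightarrow> real) set" where
  "cube n = PiE {..<n} (\<lambda>_. {-1, 1})"

definition hamming :: "nat \<Rightarrow> (nat \<Rightarrow> real) \<Rightarrow> (nat \<Rightarrow> real) \<Rightarrow> nat" where
  "hamming n x y = card {i \<in> {..<n}. x i \<noteq> y i}"

definition W1 :: "nat \<Rightarrow> (nat \<Rightarrow> real) pmf \<Rightarrow> (nat \<Rightarrow> real) pmf \<Rightarrow> real" where
  "W1 n \<nu> \<xi> = Inf {measure_pmf.expectation c (\<lambda>(x, y). real (hamming n x y)) | c.
       map_pmf fst c = \<nu> \<and> map_pmf snd c = \<xi>}"

definition product_measure :: "nat \<Rightarrow> (nat \<Rightarrow> real) pmf \<Rightarrow> bool" where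
  "product_measure n \<xi> \<longleftrightarrow>
     (\<exists>q :: nat \<Rightarrow> real pmf. (\<forall>i<n. set_pmf (q i) \<subseteq> {-1, 1}) \<and> \<xi> = Pi_pmf {..<n} undefined q)"

text \<open>The vector g_nu(y); note e^{f(y)} = 2^n nu(y), so the ratio only involves nu.\<close>
definition gvec :: "(nat \<Rightarrow> real) pmf \<Rightarrow> (nat \<Rightarrow> real) \<Rightarrow> nat \<Rightarrow> real" where
  "gvec \<nu> y i =
     (let a = pmf \<nu> (y(i := 1)); b = pmf \<nu> (y(i := -1)) in
      if a = 0 \<and> b = 0 then 0 else (a - b) / (a + b))"

definition trace_H :: "nat \<Rightarrow> (nat \<Rightarrow> real) pmf \<Rightarrow> real" where
  "trace_H n \<nu> = (\<Sum>i<n. measure_pmf.expectation \<nu> (\<lambda>y. (gvec \<nu> y i)\<^sup>2)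
                        - (measure_pmf.expectation \<nu> (\<lambda>y. gvec \<nu> y i))\<^sup>2)"

definition center :: "(nat \<Rightarrow> real) pmf \<Rightarrow> nat \<Rightarrow> real" where
  "center \<nu> i = measure_pmf.expectation \<nu> (\<lambda>x. x i)"

end

theory Submission
  imports Defs
begin


definition P2 :: "real \<Rightarrow> real pmf" where
  "P2 p = pmf_of_list [(1, p), (-1, 1 - p)]"

lemma P2_wf: fixes p :: real shows "0 \<le> p \<Longrightarrow> p \<le> 1 \<Longrightarrow> pmf_of_list_wf [(1::real, p), (-1, 1 - p)]"
  by (auto simp: pmf_of_list_wf_def)

lemma measure_P2: "0 \<le> p \<Longrightarrow> p \<le> 1 \<Longrightarrow>
   measure (P2 p) S = (if 1 \<in> S then p else 0) + (if -1 \<in> S then 1 - p else 0)"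
  unfolding P2_def by (subst measure_pmf_of_list[OF P2_wf]) auto

lemma set_P2: "0 \<le> p \<Longrightarrow> p \<le> 1 \<Longrightarrow> set_pmf (P2 p) \<subseteq> {1, -1}"
  unfolding P2_def using set_pmf_of_list[OF P2_wf] by auto

definition cond :: "(nat \<Rightarrow> real) pmf \<Rightarrow> (nat \<Rightarrow> real) \<Rightarrow> nat \<Rightarrow> real" where
  "cond \<mu> x i = (let a = pmf \<mu> (x(i := 1)); b = pmf \<mu> (x(i := -1)) in
      if a + b = 0 then 1/2 else a / (a + b))"

lemma cond_upd[simp]: "cond \<mu> (x(i := c)) i = cond \<mu> x i"
  by (simp add: cond_def)

lemma cond_bounds: "0 \<le> cond \<mu> x i" "cond \<mu> x i \<le> 1"
proof -
  have a: "pmf \<mu> (x(i:=1)) \<ge> 0" "pmf \<mu> (x(i:=-1)) \<ge> 0" by auto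
  show "0 \<le> cond \<mu> x i" using a by (auto simp: cond_def Let_def)
  have le: "\<And>a b::real. 0 \<le> a \<Longrightarrow> 0 \<le> b \<Longrightarrow> (if a + b = 0 then 1/2 else a / (a + b)) \<le> 1"
    by (auto simp: divide_le_eq_1)
  show "cond \<mu> x i \<le> 1" unfolding cond_def Let_def by (rule le) auto
qed

lemma gvec_cond: "gvec \<mu> x i = 2 * cond \<mu> x i - 1"
proof -
  have a: "pmf \<mu> (x(i := 1)) \<ge> 0" "pmf \<mu> (x(i := -1)) \<ge> 0" by auto
  show ?thesis using a unfolding gvec_def cond_def Let_def
    by (auto simp: field_simps add_nonneg_eq_0_iff)
qed

lemma ratio_aux:
  fixes a b :: real assumes "0 \<le> a" "0 \<le> b"
  shows "(if a + b = 0 then 1/2 else a / (a + b)) * (a + b) = a"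
    "(1 - (if a + b = 0 then 1/2 else a / (a + b))) * (a + b) = b"
  using assms by (auto simp: field_simps add_nonneg_eq_0_iff)

definition step :: "(nat \<Rightarrow> real) pmf \<Rightarrow> nat \<Rightarrow> (nat \<Rightarrow> real) \<Rightarrow> (nat \<Rightarrow> real) pmf" where
  "step \<mu> i x = map_pmf (\<lambda>a. x(i := a)) (P2 (cond \<mu> x i))"

lemma pmf_step: "pmf (step \<mu> i x) z =
   (if x(i := 1) = z then cond \<mu> x i else 0) + (if x(i := -1) = z then 1 - cond \<mu> x i else 0)"
  unfolding step_def pmf_map by (subst measure_P2) (auto simp: cond_bounds)

lemma cube_memD: "x \<in> cube n \<Longrightarrow> i < n \<Longrightarrow> x i = 1 \<or> x i = -1"
  "x \<in> cube n \<Longrightarrow> i \<ge> n \<Longrightarrow> x i = undefined"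
  by (auto simp: cube_def PiE_def extensional_def)

lemma cube_upd: "x \<in> cube n \<Longrightarrow> i < n \<Longrightarrow> c \<in> {1, -1} \<Longrightarrow> x(i := c) \<in> cube n"
  unfolding cube_def by (auto simp: PiE_def extensional_def Pi_iff)

lemma finite_cube: "finite (cube n)"
  unfolding cube_def by (intro finite_PiE) auto

lemma glauber:
  assumes sub: "set_pmf \<mu> \<subseteq> cube n" and i: "i < n"
  shows "bind_pmf \<mu> (step \<mu> i) = \<mu>"
proof (rule pmf_eqI)
  fix z :: "nat \<Rightarrow> real"
  define zp where "zp = z(i := 1)"
  define zm where "zm = z(i := -1)"
  have ne: "zp \<noteq> zm" unfolding zp_def zm_def by (metis fun_upd_same one_neq_neg_one)
  let ?f = "\<lambda>x. pmf (step \<mu> i x) z"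
  have "pmf (bind_pmf \<mu> (step \<mu> i)) z = (\<integral>x. ?f x \<partial>measure_pmf \<mu>)"
    by (rule pmf_bind)
  also have "\<dots> = (\<Sum>a\<in>{zp, zm}. ?f a * pmf \<mu> a)"
  proof (rule integral_measure_pmf_real)
    fix a assume a: "a \<in> set_pmf \<mu>" "?f a \<noteq> 0"
    have "a i = 1 \<or> a i = -1" using a(1) sub i cube_memD by blast
    moreover have "a(i := 1) = z \<or> a(i := -1) = z" using a(2) by (auto simp: pmf_step split: if_splits)
    ultimately show "a \<in> {zp, zm}" unfolding zp_def zm_def by auto
  qed simp
  also have "\<dots> = ?f zp * pmf \<mu> zp + ?f zm * pmf \<mu> zm" using ne by simp
  also have "\<dots> = pmf \<mu> z"
  proof -
    have cz: "cond \<mu> zp i = cond \<mu> z i" "cond \<mu> zm i = cond \<mu> z i"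
      unfolding zp_def zm_def by simp_all
    have c: "cond \<mu> z i * (pmf \<mu> zp + pmf \<mu> zm) = pmf \<mu> zp"
        "(1 - cond \<mu> z i) * (pmf \<mu> zp + pmf \<mu> zm) = pmf \<mu> zm"
      using pmf_nonneg[of \<mu> zp] pmf_nonneg[of \<mu> zm]
      unfolding cond_def zp_def zm_def Let_def by (simp_all add: ratio_aux)
    consider "z i = 1" | "z i = -1" | "z i \<noteq> 1" "z i \<noteq> -1" by blast
    then show ?thesis
    proof cases
      case 1
      then have "zp = z" "zm(i := 1) = z" "zp(i := -1) \<noteq> z" "zm \<noteq> z"
        unfolding zp_def zm_def by (auto simp: fun_eq_iff)
      then show ?thesis using c cz by (simp add: pmf_step zp_def zm_def algebra_simps)
    next
      case 2
      then have "zm = z" "zp(i := -1) = z" "zm(i := 1) \<noteq> z" "zp \<noteq> z"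
        unfolding zp_def zm_def by (auto simp: fun_eq_iff)
      then show ?thesis using c cz by (simp add: pmf_step zp_def zm_def algebra_simps)
    next
      case 3
      then have "z \<notin> cube n" using cube_memD(1)[OF _ i] by blast
      then have "pmf \<mu> z = 0" using sub by (auto simp: set_pmf_eq)
      moreover have "zp(i := 1) \<noteq> z" "zp(i := -1) \<noteq> z" "zm(i := 1) \<noteq> z" "zm(i := -1) \<noteq> z"
        using 3 by (auto simp: fun_eq_iff zp_def zm_def)
      ultimately show ?thesis by (simp add: pmf_step)
    qed
  qed
  finally show "pmf (bind_pmf \<mu> (step \<mu> i)) z = pmf \<mu> z" .
qed



definition CC :: "real \<Rightarrow> real \<Rightarrow> (real \<times> real) pmf" where
  "CC p q = pmf_of_list [((1,1), min p q), ((1,-1), p - min p q), ((-1,1), q - min p q), ((-1,-1), 1 - max p q)]"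

lemma CC_wf: fixes p q :: real shows "0 \<le> p \<Longrightarrow> p \<le> 1 \<Longrightarrow> 0 \<le> q \<Longrightarrow> q \<le> 1 \<Longrightarrow>
  pmf_of_list_wf [((1::real,1::real), min p q), ((1,-1), p - min p q), ((-1,1), q - min p q), ((-1,-1), 1 - max p q)]"
  by (auto simp: pmf_of_list_wf_def min_def max_def)

lemma measure_CC: fixes p q :: real shows "0 \<le> p \<Longrightarrow> p \<le> 1 \<Longrightarrow> 0 \<le> q \<Longrightarrow> q \<le> 1 \<Longrightarrow>
  measure (CC p q) S = (if (1,1) \<in> S then min p q else 0) + (if (1,-1) \<in> S then p - min p q else 0)
     + (if (-1,1) \<in> S then q - min p q else 0) + (if (-1,-1) \<in> S then 1 - max p q else 0)"
  unfolding CC_def by (subst measure_pmf_of_list[OF CC_wf]) auto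

lemma map_fst_CC: fixes p q :: real assumes "0 \<le> p" "p \<le> 1" "0 \<le> q" "q \<le> 1"
  shows "map_pmf fst (CC p q) = P2 p"
proof (rule pmf_eqI)
  fix a :: real
  show "pmf (map_pmf fst (CC p q)) a = pmf (P2 p) a"
    unfolding pmf_map measure_pmf_single[symmetric]
    using assms by (subst measure_CC measure_P2, simp_all)+ (auto simp: min_def max_def)
qed

lemma map_snd_CC: fixes p q :: real assumes "0 \<le> p" "p \<le> 1" "0 \<le> q" "q \<le> 1"
  shows "map_pmf snd (CC p q) = P2 q"
proof (rule pmf_eqI)
  fix a :: real
  show "pmf (map_pmf snd (CC p q)) a = pmf (P2 q) a"
    unfolding pmf_map measure_pmf_single[symmetric]
    using assms by (subst measure_CC measure_P2, simp_all)+ (auto simp: min_def max_def)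
qed

lemma expectation_CC: fixes p q :: real assumes "0 \<le> p" "p \<le> 1" "0 \<le> q" "q \<le> 1"
  shows "measure_pmf.expectation (CC p q) f = min p q * f (1,1) + (p - min p q) * f (1,-1)
     + (q - min p q) * f (-1,1) + (1 - max p q) * f (-1,-1)"
proof -
  have sub: "set_pmf (CC p q) \<subseteq> {(1,1),(1,-1),(-1,1),(-1,-1)}"
    unfolding CC_def using set_pmf_of_list[OF CC_wf[OF assms]] by auto
  have "measure_pmf.expectation (CC p q) f = (\<Sum>a\<in>{(1,1),(1,-1),(-1,1),(-1,-1)}. f a * pmf (CC p q) a)"
    by (rule integral_measure_pmf_real) (use sub in auto)
  also have "\<dots> = min p q * f (1,1) + (p - min p q) * f (1,-1)
     + (q - min p q) * f (-1,1) + (1 - max p q) * f (-1,-1)"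
    unfolding measure_pmf_single[symmetric] using assms
    by (simp add: measure_CC)
  finally show ?thesis .
qed



definition cstep :: "(nat \<Rightarrow> real) pmf \<Rightarrow> (nat \<Rightarrow> real) pmf \<Rightarrow> nat \<Rightarrow>
   (nat \<Rightarrow> real) \<times> (nat \<Rightarrow> real) \<Rightarrow> ((nat \<Rightarrow> real) \<times> (nat \<Rightarrow> real)) pmf" where
  "cstep \<mu>1 \<mu>2 n xy = bind_pmf (pmf_of_set {..<n}) (\<lambda>i.
     map_pmf (\<lambda>ab. ((fst xy)(i := fst ab), (snd xy)(i := snd ab)))
       (CC (cond \<mu>1 (fst xy) i) (cond \<mu>2 (snd xy) i)))"

lemma set_U: "(n::nat) > 0 \<Longrightarrow> set_pmf (pmf_of_set {..<n}) = {..<n}"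
  by (rule set_pmf_of_set) auto

lemma map_CC_fst: "0 \<le> p \<Longrightarrow> p \<le> 1 \<Longrightarrow> 0 \<le> q \<Longrightarrow> q \<le> 1 \<Longrightarrow>
  map_pmf (\<lambda>ab. x(i := fst ab)) (CC p q) = map_pmf (fun_upd x i) (P2 p)"
proof -
  assume a: "0 \<le> p" "p \<le> 1" "0 \<le> q" "q \<le> 1"
  have "map_pmf (\<lambda>ab. x(i := fst ab)) (CC p q) = map_pmf (fun_upd x i) (map_pmf fst (CC p q))"
    by (simp add: pmf.map_comp o_def)
  then show ?thesis using map_fst_CC[OF a] by simp
qed

lemma map_CC_snd: "0 \<le> p \<Longrightarrow> p \<le> 1 \<Longrightarrow> 0 \<le> q \<Longrightarrow> q \<le> 1 \<Longrightarrow>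
  map_pmf (\<lambda>ab. x(i := snd ab)) (CC p q) = map_pmf (fun_upd x i) (P2 q)"
proof -
  assume a: "0 \<le> p" "p \<le> 1" "0 \<le> q" "q \<le> 1"
  have "map_pmf (\<lambda>ab. x(i := snd ab)) (CC p q) = map_pmf (fun_upd x i) (map_pmf snd (CC p q))"
    by (simp add: pmf.map_comp o_def)
  then show ?thesis using map_snd_CC[OF a] by simp
qed

lemma cstep_fst:
  assumes n: "n > 0" and sub: "set_pmf \<mu>1 \<subseteq> cube n" and c: "map_pmf fst c = \<mu>1"
  shows "map_pmf fst (bind_pmf c (cstep \<mu>1 \<mu>2 n)) = \<mu>1"
proof -
  have e: "map_pmf fst (cstep \<mu>1 \<mu>2 n xy) = bind_pmf (pmf_of_set {..<n}) (\<lambda>i. step \<mu>1 i (fst xy))" for xy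
    unfolding cstep_def map_bind_pmf pmf.map_comp
    by (simp add: o_def step_def map_CC_fst cond_bounds)
  have "map_pmf fst (bind_pmf c (cstep \<mu>1 \<mu>2 n)) =
      bind_pmf c (\<lambda>xy. bind_pmf (pmf_of_set {..<n}) (\<lambda>i. step \<mu>1 i (fst xy)))"
    by (simp add: map_bind_pmf e)
  also have "\<dots> = bind_pmf (map_pmf fst c) (\<lambda>x. bind_pmf (pmf_of_set {..<n}) (\<lambda>i. step \<mu>1 i x))"
    by (simp add: bind_map_pmf)
  also have "\<dots> = bind_pmf (pmf_of_set {..<n}) (\<lambda>i. bind_pmf \<mu>1 (step \<mu>1 i))"
    unfolding c by (rule bind_commute_pmf)
  also have "\<dots> = bind_pmf (pmf_of_set {..<n}) (\<lambda>i. \<mu>1)"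
    using n by (intro bind_pmf_cong refl glauber[OF sub]) (auto simp: set_U)
  finally show ?thesis by simp
qed

lemma cstep_snd:
  assumes n: "n > 0" and sub: "set_pmf \<mu>2 \<subseteq> cube n" and c: "map_pmf snd c = \<mu>2"
  shows "map_pmf snd (bind_pmf c (cstep \<mu>1 \<mu>2 n)) = \<mu>2"
proof -
  have e: "map_pmf snd (cstep \<mu>1 \<mu>2 n xy) = bind_pmf (pmf_of_set {..<n}) (\<lambda>i. step \<mu>2 i (snd xy))" for xy
    unfolding cstep_def map_bind_pmf pmf.map_comp
    by (simp add: o_def step_def map_CC_snd cond_bounds)
  have "map_pmf snd (bind_pmf c (cstep \<mu>1 \<mu>2 n)) =
      bind_pmf c (\<lambda>xy. bind_pmf (pmf_of_set {..<n}) (\<lambda>i. step \<mu>2 i (snd xy)))"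
    by (simp add: map_bind_pmf e)
  also have "\<dots> = bind_pmf (map_pmf snd c) (\<lambda>x. bind_pmf (pmf_of_set {..<n}) (\<lambda>i. step \<mu>2 i x))"
    by (simp add: bind_map_pmf)
  also have "\<dots> = bind_pmf (pmf_of_set {..<n}) (\<lambda>i. bind_pmf \<mu>2 (step \<mu>2 i))"
    unfolding c by (rule bind_commute_pmf)
  also have "\<dots> = bind_pmf (pmf_of_set {..<n}) (\<lambda>i. \<mu>2)"
    using n by (intro bind_pmf_cong refl glauber[OF sub]) (auto simp: set_U)
  finally show ?thesis by simp
qed



lemma ham_upd:
  assumes i: "i < n"
  shows "real (hamming n (x(i := a)) (y(i := b))) =
     real (hamming n x y) - (if x i \<noteq> y i then 1 else 0) + (if a \<noteq> b then 1 else 0)"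
proof -
  define D where "D = {j\<in>{..<n}. x j \<noteq> y j}"
  have fD: "finite D" unfolding D_def by auto
  have D': "{j\<in>{..<n}. (x(i := a)) j \<noteq> (y(i := b)) j} = (D - {i}) \<union> (if a \<noteq> b then {i} else {})"
    using i unfolding D_def by auto
  have "real (card ((D - {i}) \<union> (if a \<noteq> b then {i} else {}))) =
     real (card D) - (if x i \<noteq> y i then 1 else 0) + (if a \<noteq> b then 1 else 0)"
  proof (cases "i \<in> D")
    case True
    then have "x i \<noteq> y i" "card D \<ge> 1" using fD unfolding D_def by (auto simp: Suc_le_eq card_gt_0_iff)
    then show ?thesis using True fD by (auto simp: card_Diff_singleton of_nat_diff insert_absorb)
  next
    case False
    then have "x i = y i" using i unfolding D_def by auto
    then show ?thesis using False fD by auto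
  qed
  then show ?thesis unfolding hamming_def D' D_def .
qed

lemma sum_ind_ham: "(\<Sum>i<n. (if x i \<noteq> y i then 1 else 0 :: real)) = real (hamming n x y)"
  unfolding hamming_def by (simp add: sum.inter_filter[symmetric])

lemma finite_set_CC: "0 \<le> p \<Longrightarrow> p \<le> 1 \<Longrightarrow> 0 \<le> q \<Longrightarrow> q \<le> 1 \<Longrightarrow> finite (set_pmf (CC p q))"
  unfolding CC_def by (rule finite_subset[OF set_pmf_of_list[OF CC_wf]]) auto

lemma expectation_cstep:
  assumes n: "n > 0"
  shows "measure_pmf.expectation (cstep \<mu>1 \<mu>2 n xy) (\<lambda>(x, y). real (hamming n x y)) =
    real (hamming n (fst xy) (snd xy)) * (1 - 1 / n)
      + (\<Sum>i<n. \<bar>cond \<mu>1 (fst xy) i - cond \<mu>2 (snd xy) i\<bar>) / n"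
proof -
  obtain x y where xy: "xy = (x, y)" by (cases xy)
  define H where "H = real (hamming n x y)"
  have trm: "measure_pmf.expectation (CC (cond \<mu>1 x i) (cond \<mu>2 y i))
        (\<lambda>xa. real (hamming n (x(i := fst xa)) (y(i := snd xa))))
      = H - (if x i \<noteq> y i then 1 else 0) + \<bar>cond \<mu>1 x i - cond \<mu>2 y i\<bar>" if i: "i < n" for i
  proof -
    define p where "p = cond \<mu>1 x i"
    define q where "q = cond \<mu>2 y i"
    have b: "0 \<le> p" "p \<le> 1" "0 \<le> q" "q \<le> 1" unfolding p_def q_def by (simp_all add: cond_bounds)
    define I where "I = (if x i \<noteq> y i then 1 else 0 :: real)"
    have "measure_pmf.expectation (CC p q)
        (\<lambda>xa. real (hamming n (x(i := fst xa)) (y(i := snd xa))))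
      = min p q * (H - I) + (p - min p q) * (H - I + 1) + (q - min p q) * (H - I + 1)
          + (1 - max p q) * (H - I)"
      by (subst expectation_CC[OF b]) (simp add: ham_upd[OF i] H_def I_def)
    also have "\<dots> = H - I + \<bar>p - q\<bar>" by (auto simp: min_def max_def abs_if algebra_simps)
    finally show ?thesis unfolding p_def q_def I_def .
  qed
  have "measure_pmf.expectation (cstep \<mu>1 \<mu>2 n xy) (\<lambda>(x, y). real (hamming n x y)) =
     (\<Sum>i<n. (H - (if x i \<noteq> y i then 1 else 0) + \<bar>cond \<mu>1 x i - cond \<mu>2 y i\<bar>) / real n)"
    unfolding cstep_def xy fst_conv snd_conv
    using n by (subst pmf_expectation_bind_pmf_of_set) (auto simp: finite_set_CC cond_bounds trm field_simps intro!: sum.cong)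
  also have "\<dots> = (real n * H - H + (\<Sum>i<n. \<bar>cond \<mu>1 x i - cond \<mu>2 y i\<bar>)) / real n"
    by (simp add: sum_divide_distrib[symmetric] sum.distrib sum_subtractf sum_ind_ham H_def)
  also have "\<dots> = H * (1 - 1 / n) + (\<Sum>i<n. \<bar>cond \<mu>1 x i - cond \<mu>2 y i\<bar>) / n"
    using n by (simp add: field_simps)
  finally show ?thesis unfolding xy H_def by simp
qed



lemma pm_sum1: fixes M :: "real pmf" assumes "set_pmf M \<subseteq> {1, -1}"
  shows "pmf M 1 + pmf M (-1) = 1"
proof -
  have "measure_pmf.expectation M (\<lambda>_. 1::real) = (\<Sum>a\<in>{1,-1}. 1 * pmf M a)"
    by (rule integral_measure_pmf_real) (use assms in auto)
  then show ?thesis by simp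
qed

lemma pm_mean: fixes M :: "real pmf" assumes "set_pmf M \<subseteq> {1, -1}"
  shows "measure_pmf.expectation M (\<lambda>x. x) = pmf M 1 - pmf M (-1)"
proof -
  have "measure_pmf.expectation M (\<lambda>x. x) = (\<Sum>a\<in>{1,-1}. a * pmf M a)"
    by (rule integral_measure_pmf_real) (use assms in auto)
  then show ?thesis by simp
qed

lemma pm_eq: fixes M N :: "real pmf" assumes "set_pmf M \<subseteq> {1, -1}" "set_pmf N \<subseteq> {1, -1}"
  and "measure_pmf.expectation M (\<lambda>x. x) = measure_pmf.expectation N (\<lambda>x. x)"
  shows "M = N"
proof (rule pmf_eqI)
  fix a :: real
  have e: "pmf M 1 = pmf N 1" "pmf M (-1) = pmf N (-1)"
    using pm_sum1[OF assms(1)] pm_sum1[OF assms(2)] assms(3)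
    unfolding pm_mean[OF assms(1)] pm_mean[OF assms(2)] by linarith+
  show "pmf M a = pmf N a"
  proof (cases "a = 1 \<or> a = -1")
    case True then show ?thesis using e by auto
  next
    case False
    then have "a \<notin> set_pmf M" "a \<notin> set_pmf N" using assms(1,2) by auto
    then show ?thesis by (simp add: set_pmf_iff)
  qed
qed

lemma set_P2': "0 \<le> p \<Longrightarrow> p \<le> 1 \<Longrightarrow> set_pmf (P2 p) \<subseteq> {1, -1}"
  by (rule set_P2)

lemma mean_P2: "0 \<le> p \<Longrightarrow> p \<le> 1 \<Longrightarrow> measure_pmf.expectation (P2 p) (\<lambda>x. x) = 2 * p - 1"
  by (subst pm_mean[OF set_P2]) (simp_all add: measure_pmf_single[symmetric] measure_P2)

context
  fixes n :: nat and q :: "nat \<Rightarrow> real pmf"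
  assumes q: "\<And>i. i < n \<Longrightarrow> set_pmf (q i) \<subseteq> {-1, 1}"
begin

lemma q': "i < n \<Longrightarrow> set_pmf (q i) \<subseteq> {1, -1}" using q by auto

lemma Pi_sub_cube: "set_pmf (Pi_pmf {..<n} undefined q) \<subseteq> cube n"
proof
  fix y assume "y \<in> set_pmf (Pi_pmf {..<n} undefined q)"
  then have "y \<in> PiE_dflt {..<n} undefined (set_pmf \<circ> q)" by (simp add: set_Pi_pmf)
  then show "y \<in> cube n" using q unfolding cube_def PiE_dflt_def
    by (auto simp: PiE_def extensional_def Pi_iff)
qed

lemma center_Pi: "i < n \<Longrightarrow> center (Pi_pmf {..<n} undefined q) i = measure_pmf.expectation (q i) (\<lambda>x. x)"
proof -
  assume i: "i < n"
  have "center (Pi_pmf {..<n} undefined q) i = measure_pmf.expectation (map_pmf (\<lambda>f. f i) (Pi_pmf {..<n} undefined q)) (\<lambda>x. x)"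
    unfolding center_def by simp
  also have "\<dots> = measure_pmf.expectation (q i) (\<lambda>x. x)"
    using i by (subst Pi_pmf_component) auto
  finally show ?thesis .
qed

lemma cond_Pi:
  assumes i: "i < n" and y: "y \<in> set_pmf (Pi_pmf {..<n} undefined q)"
  shows "cond (Pi_pmf {..<n} undefined q) y i = pmf (q i) 1"
proof -
  let ?\<xi> = "Pi_pmf {..<n} undefined q"
  define R where "R = (\<Prod>j\<in>{..<n} - {i}. pmf (q j) (y j))"
  have out: "\<And>j. j \<notin> {..<n} \<Longrightarrow> y j = undefined" using y set_Pi_pmf_subset[of "{..<n}" undefined q] by auto
  have pc: "pmf ?\<xi> (y(i := c)) = pmf (q i) c * R" for c
  proof -
    have "pmf ?\<xi> (y(i := c)) = (\<Prod>j\<in>{..<n}. pmf (q j) ((y(i := c)) j))"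
      using i out by (subst pmf_Pi') auto
    also have "\<dots> = pmf (q i) c * (\<Prod>j\<in>{..<n} - {i}. pmf (q j) ((y(i := c)) j))"
      using i by (subst prod.remove[of _ i]) auto
    also have "(\<Prod>j\<in>{..<n} - {i}. pmf (q j) ((y(i := c)) j)) = R"
      unfolding R_def by (intro prod.cong) auto
    finally show ?thesis .
  qed
  have "pmf ?\<xi> y > 0" using y by (simp add: pmf_positive)
  moreover have "pmf ?\<xi> y = pmf (q i) (y i) * R" using pc[of "y i"] by simp
  ultimately have R: "R \<noteq> 0" by auto
  have s: "pmf (q i) 1 + pmf (q i) (-1) = 1" using pm_sum1[OF q'[OF i]] .
  show ?thesis unfolding cond_def Let_def pc using R s
    by (simp add: distrib_right[symmetric])
qed

end

lemma jensen_abs: fixes M :: "'a pmf" and h :: "'a \<Rightarrow> real"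
  assumes fin: "finite (set_pmf M)"
  shows "measure_pmf.expectation M (\<lambda>x. \<bar>h x\<bar>) \<le> sqrt (measure_pmf.expectation M (\<lambda>x. (h x)\<^sup>2))"
proof -
  let ?E = "measure_pmf.expectation M"
  have "0 \<le> ?E (\<lambda>x. (\<bar>h x\<bar> - ?E (\<lambda>x. \<bar>h x\<bar>))\<^sup>2)" by simp
  also have "\<dots> = ?E (\<lambda>x. \<bar>h x\<bar>\<^sup>2) - (?E (\<lambda>x. \<bar>h x\<bar>))\<^sup>2"
    by (rule measure_pmf.variance_eq) (simp_all add: integrable_measure_pmf_finite fin)
  finally have "(?E (\<lambda>x. \<bar>h x\<bar>))\<^sup>2 \<le> ?E (\<lambda>x. (h x)\<^sup>2)" by simp
  then show ?thesis by (simp add: real_le_rsqrt)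
qed

lemma sum_sqrt_le: fixes v :: "nat \<Rightarrow> real" assumes "\<And>i. i < n \<Longrightarrow> 0 \<le> v i"
  shows "(\<Sum>i<n. sqrt (v i)) \<le> sqrt (real n * (\<Sum>i<n. v i))"
proof -
  have "(\<Sum>i<n. sqrt (v i))\<^sup>2 \<le> (\<Sum>i<n. (sqrt (v i))\<^sup>2) * card {..<n}"
    by (rule sum_squared_le_sum_of_squares)
  also have "\<dots> = real n * (\<Sum>i<n. v i)" using assms by simp
  finally show ?thesis by (simp add: real_le_rsqrt)
qed



lemma finite_set_cstep: "n > 0 \<Longrightarrow> finite (set_pmf (cstep \<mu>1 \<mu>2 n xy))"
  unfolding cstep_def by (simp add: set_U finite_set_CC cond_bounds)

lemma coupling_set:
  assumes "map_pmf fst c = \<nu>" "map_pmf snd c = \<xi>" "a \<in> set_pmf c"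
  shows "fst a \<in> set_pmf \<nu>" "snd a \<in> set_pmf \<xi>"
  using assms by (auto simp flip: assms(1,2))

lemma coupling_finite:
  assumes "map_pmf fst c = \<nu>" "map_pmf snd c = \<xi>" "finite (set_pmf \<nu>)" "finite (set_pmf \<xi>)"
  shows "finite (set_pmf c)"
proof -
  have "set_pmf c \<subseteq> set_pmf \<nu> \<times> set_pmf \<xi>" using coupling_set[OF assms(1,2)] by force
  then show ?thesis using assms(3,4) by (rule finite_subset[OF _ finite_cartesian_product])
qed

lemma step_cost:
  fixes \<nu> :: "(nat \<Rightarrow> real) pmf" and q :: "nat \<Rightarrow> real pmf"
  assumes n: "n > 0" and sub: "set_pmf \<nu> \<subseteq> cube n"
    and q: "\<And>i. i < n \<Longrightarrow> set_pmf (q i) \<subseteq> {-1, 1}"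
    and xi: "\<xi> = Pi_pmf {..<n} undefined q"
    and cm: "\<And>i. i < n \<Longrightarrow> center \<xi> i = m i"
    and c1: "map_pmf fst c = \<nu>" and c2: "map_pmf snd c = \<xi>"
  defines "G \<equiv> (\<lambda>x. (\<Sum>i<n. \<bar>gvec \<nu> x i - m i\<bar>) / 2)"
  shows "measure_pmf.expectation (bind_pmf c (cstep \<nu> \<xi> n)) (\<lambda>(x, y). real (hamming n x y)) =
     (1 - 1 / n) * measure_pmf.expectation c (\<lambda>(x, y). real (hamming n x y))
       + measure_pmf.expectation \<nu> G / n"
proof -
  have xisub: "set_pmf \<xi> \<subseteq> cube n" unfolding xi by (rule Pi_sub_cube[of n q, OF q])
  have finc: "finite (set_pmf c)"
    by (rule coupling_finite[OF c1 c2]) (use finite_subset[OF sub finite_cube] finite_subset[OF xisub finite_cube] in auto)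
  have condxi: "cond \<xi> y i = (1 + m i) / 2" if "y \<in> set_pmf \<xi>" "i < n" for y i
  proof -
    have cxi: "cond \<xi> y i = pmf (q i) 1" unfolding xi by (rule cond_Pi[of n q, OF q]) (use that xi in auto)
    have qi: "set_pmf (q i) \<subseteq> {1,-1}" using q[OF that(2)] by auto
    moreover have "m i = pmf (q i) 1 - pmf (q i) (-1)"
      using cm[OF that(2)] center_Pi[of n q, OF q that(2)] pm_mean[OF qi] xi by simp
    moreover have "pmf (q i) 1 + pmf (q i) (-1) = 1" by (rule pm_sum1[OF qi])
    ultimately show ?thesis using cxi by simp
  qed
  have key: "(\<Sum>i<n. \<bar>cond \<nu> (fst a) i - cond \<xi> (snd a) i\<bar>) = G (fst a)" if a: "a \<in> set_pmf c" for a
  proof -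
    have "(\<Sum>i<n. \<bar>cond \<nu> (fst a) i - cond \<xi> (snd a) i\<bar>) = (\<Sum>i<n. \<bar>gvec \<nu> (fst a) i - m i\<bar> / 2)"
    proof (rule sum.cong)
      fix i assume "i \<in> {..<n}"
      then have h: "cond \<xi> (snd a) i = (1 + m i) / 2" using condxi[OF coupling_set(2)[OF c1 c2 a]] by simp
      show "\<bar>cond \<nu> (fst a) i - cond \<xi> (snd a) i\<bar> = \<bar>gvec \<nu> (fst a) i - m i\<bar> / 2"
        unfolding gvec_cond h by (auto simp: abs_if field_simps)
    qed simp
    then show ?thesis unfolding G_def by (simp add: sum_divide_distrib)
  qed
  let ?h = "\<lambda>(x, y). real (hamming n x y)"
  have "measure_pmf.expectation (bind_pmf c (cstep \<nu> \<xi> n)) ?h =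
      (\<Sum>a\<in>set_pmf c. pmf c a *\<^sub>R measure_pmf.expectation (cstep \<nu> \<xi> n a) ?h)"
    by (rule pmf_expectation_bind) (simp_all add: finc finite_set_cstep n)
  also have "\<dots> = (\<Sum>a\<in>set_pmf c. (?h a * (1 - 1 / n) + G (fst a) / n) * pmf c a)"
  proof (intro sum.cong refl)
    fix a assume a: "a \<in> set_pmf c"
    show "pmf c a *\<^sub>R measure_pmf.expectation (cstep \<nu> \<xi> n a) ?h = (?h a * (1 - 1 / n) + G (fst a) / n) * pmf c a"
      using expectation_cstep[OF n, of \<nu> \<xi> a] key[OF a] by (simp add: case_prod_unfold)
  qed
  also have "\<dots> = measure_pmf.expectation c (\<lambda>a. ?h a * (1 - 1 / n) + G (fst a) / n)"
    by (rule integral_measure_pmf_real[symmetric]) (simp_all add: finc)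
  also have "\<dots> = measure_pmf.expectation c (\<lambda>a. ?h a * (1 - 1 / n)) + measure_pmf.expectation c (\<lambda>a. G (fst a) / n)"
    by (rule Bochner_Integration.integral_add) (simp_all add: integrable_measure_pmf_finite finc)
  also have "measure_pmf.expectation c (\<lambda>a. G (fst a) / n) = measure_pmf.expectation (map_pmf fst c) G / n"
    by simp
  finally show ?thesis unfolding c1 by (simp add: mult.commute)
qed



lemma W1_bound:
  fixes \<nu> :: "(nat \<Rightarrow> real) pmf" and q :: "nat \<Rightarrow> real pmf"
  assumes n: "n > 0" and sub: "set_pmf \<nu> \<subseteq> cube n"
    and q: "\<And>i. i < n \<Longrightarrow> set_pmf (q i) \<subseteq> {-1, 1}"
    and xi: "\<xi> = Pi_pmf {..<n} undefined q"
    and cm: "\<And>i. i < n \<Longrightarrow> center \<xi> i = m i"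
  shows "W1 n \<nu> \<xi> \<le> measure_pmf.expectation \<nu> (\<lambda>x. (\<Sum>i<n. \<bar>gvec \<nu> x i - m i\<bar>) / 2)"
proof -
  define G where "G = (\<lambda>x. (\<Sum>i<n. \<bar>gvec \<nu> x i - m i\<bar>) / 2)"
  define T where "T = measure_pmf.expectation \<nu> G"
  let ?h = "\<lambda>(x, y). real (hamming n x y)"
  define S where "S = {measure_pmf.expectation c ?h | c. map_pmf fst c = \<nu> \<and> map_pmf snd c = \<xi>}"
  have W: "W1 n \<nu> \<xi> = Inf S" unfolding W1_def S_def by simp
  have xisub: "set_pmf \<xi> \<subseteq> cube n" unfolding xi by (rule Pi_sub_cube[of n q, OF q])
  have pairin: "measure_pmf.expectation (pair_pmf \<nu> \<xi>) ?h \<in> S"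
    unfolding S_def by (auto simp: map_fst_pair_pmf map_snd_pair_pmf)
  then have ne: "S \<noteq> {}" by auto
  have bdd: "bdd_below S" unfolding S_def
    by (rule bdd_belowI[of _ 0]) (auto intro!: integral_nonneg_AE simp: case_prod_unfold)
  have lower: "real n * Inf S - T \<le> (real n - 1) * measure_pmf.expectation c ?h"
    if c1: "map_pmf fst c = \<nu>" and c2: "map_pmf snd c = \<xi>" for c
  proof -
    have "measure_pmf.expectation (bind_pmf c (cstep \<nu> \<xi> n)) ?h \<in> S"
      unfolding S_def using cstep_fst[OF n sub c1] cstep_snd[OF n xisub c2] by blast
    then have "Inf S \<le> measure_pmf.expectation (bind_pmf c (cstep \<nu> \<xi> n)) ?h"
      by (rule cInf_lower[OF _ bdd])
    also have "\<dots> = (1 - 1 / n) * measure_pmf.expectation c ?h + T / n"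
      unfolding T_def G_def by (rule step_cost[OF n sub q xi cm c1 c2])
    finally have "Inf S \<le> (1 - 1 / n) * measure_pmf.expectation c ?h + T / n" .
    then have "real n * Inf S \<le> real n * ((1 - 1 / n) * measure_pmf.expectation c ?h + T / n)"
      using n by (intro mult_left_mono) auto
    also have "\<dots> = (real n - 1) * measure_pmf.expectation c ?h + T"
      using n by (simp add: field_simps)
    finally show ?thesis by simp
  qed
  have "Inf S \<le> T"
  proof (cases "n = 1")
    case True
    then show ?thesis using lower[of "pair_pmf \<nu> \<xi>"] by (simp add: map_fst_pair_pmf map_snd_pair_pmf)
  next
    case False
    then have n2: "real n - 1 > 0" using n by simp
    have "(real n * Inf S - T) / (real n - 1) \<le> Inf S"
    proof (rule cInf_greatest[OF ne])
      fix s assume "s \<in> S"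
      then obtain c where c: "map_pmf fst c = \<nu>" "map_pmf snd c = \<xi>" "s = measure_pmf.expectation c ?h"
        unfolding S_def by blast
      show "(real n * Inf S - T) / (real n - 1) \<le> s"
        using lower[OF c(1,2)] n2 c(3) by (simp add: divide_le_eq mult.commute)
    qed
    then have "real n * Inf S - T \<le> (real n - 1) * Inf S" using n2 by (simp add: divide_le_eq mult.commute)
    then show ?thesis by (simp add: algebra_simps)
  qed
  then show ?thesis unfolding W T_def G_def .
qed

lemma center_eq:
  assumes sub: "set_pmf \<nu> \<subseteq> cube n" and i: "i < n"
  shows "center \<nu> i = measure_pmf.expectation \<nu> (\<lambda>y. gvec \<nu> y i)"
proof -
  have fin: "finite (set_pmf \<nu>)" using finite_subset[OF sub finite_cube] .
  have fs: "finite (set_pmf (step \<nu> i x))" for x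
    unfolding step_def using finite_subset[OF set_P2[OF cond_bounds]] by simp
  have st: "measure_pmf.expectation (step \<nu> i x) (\<lambda>x. x i) = gvec \<nu> x i" for x
    unfolding step_def gvec_cond by (simp add: mean_P2 cond_bounds)
  have "center \<nu> i = measure_pmf.expectation (bind_pmf \<nu> (step \<nu> i)) (\<lambda>x. x i)"
    unfolding center_def glauber[OF sub i] ..
  also have "\<dots> = (\<Sum>a\<in>set_pmf \<nu>. pmf \<nu> a *\<^sub>R measure_pmf.expectation (step \<nu> i a) (\<lambda>x. x i))"
    by (rule pmf_expectation_bind) (simp_all add: fin fs)
  also have "\<dots> = (\<Sum>a\<in>set_pmf \<nu>. gvec \<nu> a i * pmf \<nu> a)" by (simp add: st mult.commute)
  also have "\<dots> = measure_pmf.expectation \<nu> (\<lambda>y. gvec \<nu> y i)"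
    by (rule integral_measure_pmf_real[symmetric]) (simp_all add: fin)
  finally show ?thesis .
qed



theorem proposition3p5:
  fixes n :: nat and \<nu> :: "(nat \<Rightarrow> real) pmf"
  assumes "set_pmf \<nu> \<subseteq> cube n"
  defines "m \<equiv> (\<lambda>i. measure_pmf.expectation \<nu> (\<lambda>y. gvec \<nu> y i))"
  shows "(\<forall>i<n. center \<nu> i = m i)
    \<and> (\<exists>!\<xi>. product_measure n \<xi> \<and> (\<forall>i<n. center \<xi> i = m i))
    \<and> (\<forall>\<xi>. product_measure n \<xi> \<and> (\<forall>i<n. center \<xi> i = m i)
           \<longrightarrow> W1 n \<nu> \<xi> \<le> sqrt (real n * trace_H n \<nu>))"
proof -
  note sub = assms(1)
  have fin: "finite (set_pmf \<nu>)" using finite_subset[OF sub finite_cube] .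
  have int: "integrable (measure_pmf \<nu>) f" for f :: "_ \<Rightarrow> real"
    by (rule integrable_measure_pmf_finite[OF fin])
  have gb: "-1 \<le> gvec \<nu> y i" "gvec \<nu> y i \<le> 1" for y i
    using cond_bounds[of \<nu> y i] by (simp_all add: gvec_cond)
  have mb: "-1 \<le> m i" "m i \<le> 1" for i
    unfolding m_def
    by (rule measure_pmf.integral_ge_const[OF int], simp add: gb)
       (rule measure_pmf.integral_le_const[OF int], simp add: gb)
  have part1: "\<forall>i<n. center \<nu> i = m i" unfolding m_def using center_eq[OF sub] by blast
  define q0 where "q0 = (\<lambda>i. P2 ((1 + m i) / 2))"
  have q0b: "0 \<le> (1 + m i) / 2" "(1 + m i) / 2 \<le> 1" for i using mb[of i] by auto
  have q0s: "\<And>i. i < n \<Longrightarrow> set_pmf (q0 i) \<subseteq> {-1, 1}"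
    unfolding q0_def using set_P2[OF q0b] by auto
  have mq0: "measure_pmf.expectation (q0 i) (\<lambda>x. x) = m i" for i
    unfolding q0_def by (subst mean_P2[OF q0b]) (simp add: field_simps)
  define \<xi>0 where "\<xi>0 = Pi_pmf {..<n} undefined q0"
  have ex0: "product_measure n \<xi>0 \<and> (\<forall>i<n. center \<xi>0 i = m i)"
  proof
    show "product_measure n \<xi>0" unfolding product_measure_def \<xi>0_def using q0s by blast
    show "\<forall>i<n. center \<xi>0 i = m i"
      unfolding \<xi>0_def using center_Pi[of n q0, OF q0s] by (simp add: mq0)
  qed
  have uniq: "\<xi> = \<xi>0" if H: "product_measure n \<xi> \<and> (\<forall>i<n. center \<xi> i = m i)" for \<xi>
  proof -
    obtain q where q: "\<And>i. i < n \<Longrightarrow> set_pmf (q i) \<subseteq> {-1, 1}" and xi: "\<xi> = Pi_pmf {..<n} undefined q"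
      using H unfolding product_measure_def by blast
    show ?thesis unfolding xi \<xi>0_def
    proof (rule Pi_pmf_cong)
      fix i assume i: "i \<in> {..<n}"
      have "measure_pmf.expectation (q i) (\<lambda>x. x) = m i"
        using H center_Pi[of n q, OF q] i xi by auto
      moreover have "measure_pmf.expectation (q0 i) (\<lambda>x. x) = m i"
        by (rule mq0)
      ultimately show "q i = q0 i"
        using pm_eq[of "q i" "q0 i"] q[of i] q0s[of i] i by auto
    qed simp_all
  qed
  have part2: "\<exists>!\<xi>. product_measure n \<xi> \<and> (\<forall>i<n. center \<xi> i = m i)"
    using ex0 uniq by blast
  have part3: "W1 n \<nu> \<xi> \<le> sqrt (real n * trace_H n \<nu>)"
    if H: "product_measure n \<xi> \<and> (\<forall>i<n. center \<xi> i = m i)" for \<xi>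
  proof -
    obtain q where q: "\<And>i. i < n \<Longrightarrow> set_pmf (q i) \<subseteq> {-1, 1}" and xi: "\<xi> = Pi_pmf {..<n} undefined q"
      using H unfolding product_measure_def by blast
    have cm: "\<And>i. i < n \<Longrightarrow> center \<xi> i = m i" using H by blast
    define v where "v = (\<lambda>i. measure_pmf.expectation \<nu> (\<lambda>y. (gvec \<nu> y i)\<^sup>2) - (m i)\<^sup>2)"
    have vvar: "v i = measure_pmf.expectation \<nu> (\<lambda>y. (gvec \<nu> y i - m i)\<^sup>2)" for i
      unfolding v_def m_def by (rule measure_pmf.variance_eq[symmetric]) (simp_all add: int)
    have v0: "0 \<le> v i" for i unfolding vvar by simp
    have tr: "trace_H n \<nu> = (\<Sum>i<n. v i)" unfolding trace_H_def v_def m_def ..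
    show ?thesis
    proof (cases "n = 0")
      case True
      have "W1 n \<nu> \<xi> \<le> measure_pmf.expectation (pair_pmf \<nu> \<xi>) (\<lambda>(x, y). real (hamming n x y))"
        unfolding W1_def
        by (rule cInf_lower)
           (auto simp: map_fst_pair_pmf map_snd_pair_pmf case_prod_unfold
                 intro!: bdd_belowI[of _ 0] integral_nonneg_AE)
      also have "\<dots> = 0" using True by (simp add: hamming_def case_prod_unfold)
      finally show ?thesis using True by simp
    next
      case False
      then have n: "n > 0" by simp
      have "W1 n \<nu> \<xi> \<le> measure_pmf.expectation \<nu> (\<lambda>x. (\<Sum>i<n. \<bar>gvec \<nu> x i - m i\<bar>) / 2)"
        by (rule W1_bound[OF n sub q xi cm])
      also have "\<dots> = (\<Sum>i<n. measure_pmf.expectation \<nu> (\<lambda>x. \<bar>gvec \<nu> x i - m i\<bar>)) / 2"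
        by (simp add: Bochner_Integration.integral_sum int)
      also have "\<dots> \<le> (\<Sum>i<n. sqrt (v i)) / 2"
        unfolding vvar by (intro divide_right_mono sum_mono jensen_abs fin) simp
      also have "\<dots> \<le> sqrt (real n * (\<Sum>i<n. v i)) / 2"
        by (intro divide_right_mono sum_sqrt_le v0) simp
      also have "\<dots> \<le> sqrt (real n * trace_H n \<nu>)" unfolding tr by (simp add: v0 sum_nonneg)
      finally show ?thesis .
    qed
  qed
  show ?thesis using part1 part2 part3 by blast
qed

end
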